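(* Let $\ell$ and $B$ be positive integers with $B\ge 5\cdot 2^{\ell+1}$, and let $H$ be a graph with loops allowed on an alphabet $A$ of $\ell$ letters. For any finite word $w$ over $A$ with $|w|\ge B^{\ell}$, the graph $G_{w,H}(1,2,\dots,|w|)$ contains, as an induced subgraph, a strong $\ell$-factor $G_{w',H}(1,2,\dots,|w'|)$ of order at least $B$, where $w'$ is a factor of $w$.
   Context: A word over $A$ is a map $w:\{1,\dots,n\}\to A$, $|w|=n$, $w_i=w(i)$; $w'$ is a factor of $w$ if $w'_i=w_{i+s}$ for some fixed $s\ge0$ and all $1\le i\le|w'|$. For positive integers $u_1<\dots<u_k\le|w|$, $G_{w,H}(u_1,\dots,u_k)$ has vertex set $\{u_i\}$ and $u_iu_j$ is an edge iff ($|u_i-u_j|=1$ and $w_{u_i}w_{u_j}\notin E(H)$) or ($|u_i-u_j|>1$ and $w_{u_i}w_{u_j}\in E(H)$) (loops of $H$ handle equal letters). An $\ell$-factor is a graph $G_{w,H}(u_1,\dots,u_k)$ with $u_1,\dots,u_k$ consecutive integers and $|V(H)|=\ell$. Its letter partition consists of the nonempty sets $V_a=\{u_i:w_{u_i}=a\}$, $a\in A$; it is an $(\ell,2)$-partition, and the $\ell$-factor is strong if this is a strong $(\ell,2)$-partition, i.e., every bag $V_a$ has at least $5\cdot2^{\ell}\cdot 2$ vertices. *)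

theory Defs
  imports Main
begin

text \<open>Words are lists; position i (1-based, 1 \<le> i \<le> |w|) carries letter w ! (i - 1).
  A graph H with loops allowed on the alphabet is a symmetric relation E on letters
  (E a a means a loop at a).\<close>

definition letter :: "'a list \<Rightarrow> nat \<Rightarrow> 'a" where
  "letter w i = w ! (i - 1)"

definition dist_nat :: "nat \<Rightarrow> nat \<Rightarrow> nat" where
  "dist_nat u v = (if u \<le> v then v - u else u - v)"

definition wedge :: "'a list \<Rightarrow> ('a \<Rightarrow> 'a \<Rightarrow> bool) \<Rightarrow> nat \<Rightarrow> nat \<Rightarrow> bool" where
  "wedge w E u v \<longleftrightarrow>
     (dist_nat u v = 1 \<and> \<not> E (letter w u) (letter w v)) \<or>
     (dist_nat u v > 1 \<and> E (letter w u) (letter w v))"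

definition is_factor :: "'a list \<Rightarrow> 'a list \<Rightarrow> bool" where
  "is_factor w' w \<longleftrightarrow> (\<exists>s. s + length w' \<le> length w \<and>
      (\<forall>i\<in>{1..length w'}. letter w' i = letter w (i + s)))"

definition bag :: "'a list \<Rightarrow> 'a \<Rightarrow> nat set" where
  "bag w a = {i \<in> {1..length w}. letter w i = a}"

definition strong_factor :: "nat \<Rightarrow> 'a list \<Rightarrow> bool" where
  "strong_factor l w \<longleftrightarrow> (\<forall>a. bag w a \<noteq> {} \<longrightarrow> card (bag w a) \<ge> 5 * 2 ^ l * 2)"

definition induced_sub :: "('a \<Rightarrow> 'a \<Rightarrow> bool) \<Rightarrow> 'a list \<Rightarrow> 'a list \<Rightarrow> bool" where
  "induced_sub E w' w \<longleftrightarrow> (\<exists>f. inj_on f {1..length w'} \<and> f ` {1..length w'} \<subseteq> {1..length w} \<and>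
     (\<forall>i\<in>{1..length w'}. \<forall>j\<in>{1..length w'}. wedge w' E i j \<longleftrightarrow> wedge w E (f i) (f j)))"

end

theory Submission
  imports Defs
begin

lemma bag_eq: "bag w a = Suc ` {i. i < length w \<and> a = w ! i}"
proof (intro set_eqI iffI)
  fix x assume "x \<in> bag w a"
  then have "1 \<le> x" "x \<le> length w" "w ! (x - 1) = a" unfolding bag_def letter_def by auto
  then show "x \<in> Suc ` {i. i < length w \<and> a = w ! i}"
    by (intro image_eqI[of _ _ "x - 1"]) auto
next
  fix x assume "x \<in> Suc ` {i. i < length w \<and> a = w ! i}"
  then show "x \<in> bag w a" unfolding bag_def letter_def by auto
qed

lemma bag_card: "card (bag w a) = count_list w a"
proof -
  have "card (bag w a) = card {i. i < length w \<and> a = w ! i}"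
    unfolding bag_eq by (simp add: card_image)
  also have "\<dots> = count_list w a"
    by (simp add: count_list_eq_length_filter length_filter_conv_card)
  finally show ?thesis .
qed

lemma bag_ne: "bag w a \<noteq> {} \<Longrightarrow> a \<in> set w"
  unfolding bag_eq by auto

lemma seg:
  assumes "\<forall>p v q. w = p @ v @ q \<longrightarrow> a \<notin> set v \<longrightarrow> length v < m"
  shows "length w + 1 \<le> (count_list w a + 1) * m"
  using assms
proof (induction w rule: length_induct)
  case (1 w)
  define u where "u = takeWhile (\<lambda>x. x \<noteq> a) w"
  define r where "r = dropWhile (\<lambda>x. x \<noteq> a) w"
  have w: "w = u @ r" by (simp add: u_def r_def)
  have au: "a \<notin> set u" unfolding u_def using set_takeWhileD[of a "\<lambda>x. x \<noteq> a" w] by blast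
  have "w = [] @ u @ r" using w by simp
  then have lu: "length u < m" using "1.prems" au by blast
  show ?case
  proof (cases r)
    case Nil
    then show ?thesis using w lu au by simp
  next
    case (Cons x r')
    have xa: "x = a" using Cons unfolding r_def dropWhile_eq_Cons_conv by simp
    have "\<forall>p v q. r' = p @ v @ q \<longrightarrow> a \<notin> set v \<longrightarrow> length v < m"
    proof (intro allI impI)
      fix p v q assume "r' = p @ v @ q" "a \<notin> set v"
      then have "w = (u @ x # p) @ v @ q" using w Cons by simp
      then show "length v < m" using "1.prems" \<open>a \<notin> set v\<close> by blast
    qed
    moreover have "length r' < length w" using w Cons by simp
    ultimately have "length r' + 1 \<le> (count_list r' a + 1) * m" using "1.IH" by blast
    moreover have "count_list w a = count_list r' a + 1" using w Cons xa au by simp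
    moreover have "length w = length u + length r' + 1" using w Cons by simp
    ultimately show ?thesis using lu by (simp add: algebra_simps)
  qed
qed

lemma main:
  assumes "T \<le> B" "0 < T"
  shows "card (set w) \<le> k \<Longrightarrow> B ^ k \<le> length w \<Longrightarrow>
    \<exists>p v q. w = p @ v @ q \<and> B \<le> length v \<and> (\<forall>a\<in>set v. T \<le> count_list v a)"
proof (induction k arbitrary: w)
  case 0
  then show ?case by auto
next
  case (Suc k)
  have B1: "1 \<le> B" using assms by simp
  show ?case
  proof (cases "\<forall>a\<in>set w. T \<le> count_list w a")
    case True
    have "B \<le> B ^ Suc k" using B1 by simp
    then show ?thesis using True Suc.prems by (metis append_Nil append_Nil2 order_trans)
  next
    case False
    then obtain a where a: "a \<in> set w" "count_list w a < T" by (auto simp: not_le)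
    show ?thesis
    proof (cases "\<exists>p v q. w = p @ v @ q \<and> a \<notin> set v \<and> B ^ k \<le> length v")
      case True
      then obtain p v q where pvq: "w = p @ v @ q" "a \<notin> set v" "B ^ k \<le> length v" by blast
      have "set v \<subseteq> set w - {a}" using pvq by auto
      then have "card (set v) \<le> card (set w - {a})" by (simp add: card_mono)
      also have "\<dots> = card (set w) - 1" using a by simp
      finally have "card (set v) \<le> k" using Suc.prems by simp
      from Suc.IH[OF this pvq(3)] obtain p' v' q' where
        "v = p' @ v' @ q'" "B \<le> length v'" "\<forall>a\<in>set v'. T \<le> count_list v' a" by blast
      then show ?thesis using pvq(1) by (metis append.assoc)
    next
      case False
      then have "\<forall>p v q. w = p @ v @ q \<longrightarrow> a \<notin> set v \<longrightarrow> length v < B ^ k" by (auto simp: not_le)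
      from seg[OF this] have "length w + 1 \<le> (count_list w a + 1) * B ^ k" .
      also have "\<dots> \<le> T * B ^ k" using a mult_le_mono1[of "count_list w a + 1" T "B ^ k"] by simp
      also have "\<dots> \<le> B * B ^ k" using assms by simp
      finally show ?thesis using Suc.prems by simp
    qed
  qed
qed

lemma factor_props:
  assumes "w = p @ v @ q"
  shows "is_factor v w \<and> induced_sub E v w"
proof -
  have L: "letter w (i + length p) = letter v i" if "i \<in> {1..length v}" for i
  proof -
    have "i + length p - 1 = length p + (i - 1)" using that by auto
    then have "letter w (i + length p) = (v @ q) ! (i - 1)"
      unfolding letter_def assms by (simp only: nth_append_length_plus)
    also have "\<dots> = v ! (i - 1)" proof -
      have "i - 1 < length v" using that by auto
      then show ?thesis by (simp add: nth_append)
    qed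
    finally show ?thesis unfolding letter_def .
  qed
  have D: "dist_nat (i + s) (j + s) = dist_nat i j" for i j s :: nat
    unfolding dist_nat_def by auto
  show ?thesis
    unfolding is_factor_def induced_sub_def
  proof (intro conjI exI[of _ "length p"] exI[of _ "\<lambda>i. i + length p"])
    show "length p + length v \<le> length w" using assms by simp
    show "\<forall>i\<in>{1..length v}. letter v i = letter w (i + length p)" using L by simp
    show "inj_on (\<lambda>i. i + length p) {1..length v}" by (simp add: inj_on_def)
    show "(\<lambda>i. i + length p) ` {1..length v} \<subseteq> {1..length w}" using assms by auto
    show "\<forall>i\<in>{1..length v}. \<forall>j\<in>{1..length v}. wedge v E i j = wedge w E (i + length p) (j + length p)"
      unfolding wedge_def using L D by simp
  qed
qed

theorem lemma3p12:
  fixes l B :: nat and A :: "'a set" and E :: "'a \<Rightarrow> 'a \<Rightarrow> bool" and w :: "'a list"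
  assumes "l > 0" and "B > 0" and "B \<ge> 5 * 2 ^ (l + 1)"
    and "finite A" and "card A = l"
    and "\<forall>a b. E a b \<longrightarrow> a \<in> A \<and> b \<in> A"
    and "\<forall>a b. E a b \<longrightarrow> E b a"
    and "set w \<subseteq> A"
    and "length w \<ge> B ^ l"
  shows "\<exists>w'. is_factor w' w \<and> length w' \<ge> B \<and> strong_factor l w' \<and> induced_sub E w' w"
proof -
  have T: "5 * 2 ^ l * 2 \<le> B" "0 < (5 * 2 ^ l * 2 :: nat)" using assms(3) by (simp_all add: mult.commute)
  have "card (set w) \<le> l" using assms(4,5,8) card_mono by blast
  from main[OF T this assms(9)] obtain p v q where
    pvq: "w = p @ v @ q" "B \<le> length v" "\<forall>a\<in>set v. 5 * 2 ^ l * 2 \<le> count_list v a" by blast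
  have "strong_factor l v" unfolding strong_factor_def using pvq(3) bag_ne bag_card by metis
  then show ?thesis using factor_props[OF pvq(1)] pvq(2) by blast
qed

end
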